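(* Let $(\bar M,\bar\varphi,\bar\xi_\alpha,\bar\eta^\alpha,\bar g)$ be an indefinite $\mathcal S$-manifold and $(M,g,S(TM))$ a characteristic lightlike hypersurface of $\bar M$, with $E,N$ defined on a coordinate neighbourhood $\mathcal U$. Then for all $X,Y\in\Gamma(D_0|_{\mathcal U})$: $\bar g((\bar\nabla_X\bar\varphi)Y,E)=0$ and $\bar g((\bar\nabla_X\bar\varphi)Y,N)=0$.
   Context: Indefinite $g.f.f$-manifold $(\bar M,\bar\varphi,\bar\xi_\alpha,\bar\eta^\alpha,\bar g)$, $\alpha=1,\dots,r$, $\dim\bar M=2n+r$: $\bar\varphi$ a non-null $(1,1)$-tensor of constant rank, $\bar\varphi^2=-I+\sum_\alpha\bar\eta^\alpha\otimes\bar\xi_\alpha$, $\bar\eta^\alpha(\bar\xi_\beta)=\delta^\alpha_\beta$, $\bar g$ semi-Riemannian of index $\nu$, $0<\nu<2n+r$, with $\bar g(\bar\varphi X,\bar\varphi Y)=\bar g(X,Y)-\sum_\alpha\varepsilon_\alpha\bar\eta^\alpha(X)\bar\eta^\alpha(Y)$, $\varepsilon_\alpha=\bar g(\bar\xi_\alpha,\bar\xi_\alpha)=\pm1$. Indefinite $\mathcal S$-manifold: additionally $N_{\bar\varphi}+2\sum_\alpha d\bar\eta^\alpha\otimes\bar\xi_\alpha=0$ and $d\bar\eta^\alpha=\Phi$ for all $\alpha$, $\Phi(X,Y)=\bar g(X,\bar\varphi Y)$; $\bar\nabla$ denotes its Levi-Civita connection. Lightlike hypersurface $M$: induced metric $g$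 degenerate, $Rad(TM)=TM\cap TM^\perp$ of rank one, screen $S(TM)$ with $TM=Rad(TM)\perp S(TM)$; $ltr(M)$ the lightlike transversal bundle with local sections $E$ of $Rad(TM)$, $N$ of $ltr(M)$ satisfying $\bar g(N,E)=1$, $\bar g(N,N)=0$, $N\perp S(TM)$. $(M,g,S(TM))$ is characteristic if all $\bar\xi_\alpha$ are tangent to $M$, $\ker\bar\varphi\subset S(TM)$ and $\bar\varphi E\in\Gamma(S(TM))$ (then $\bar\varphi N\in\Gamma(S(TM))$). $D_0$ is the orthogonal complement in $S(TM)$ of the non-degenerate rank-2 bundle $\bar\varphi(Rad(TM))\oplus\bar\varphi(ltr(M))$; $D_0$ is $\bar\varphi$-invariant and contains all $\bar\xi_\alpha$. *)

theory Defs
  imports "HOL-Analysis.Analysis"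
begin

text \<open>Local (coordinate) model. The ambient manifold is modelled on an open set
  U of real^'m (a chart); tensor fields are given by their coordinate expressions.\<close>

fun smoothk :: "nat \<Rightarrow> (real^'m) set \<Rightarrow> (real^'m \<Rightarrow> 'b::euclidean_space) \<Rightarrow> bool" where
  "smoothk 0 U f = continuous_on U f"
| "smoothk (Suc k) U f = (f differentiable_on U \<and>
      (\<forall>i::'m. smoothk k U (\<lambda>x. frechet_derivative f (at x) (axis i 1))))"

definition smooth_on :: "(real^'m) set \<Rightarrow> (real^'m \<Rightarrow> 'b::euclidean_space) \<Rightarrow> bool" where
  "smooth_on U f = (\<forall>k. smoothk k U f)"

definition gb :: "(real^'m \<Rightarrow> real^'m^'m) \<Rightarrow> real^'m \<Rightarrow> real^'m \<Rightarrow> real^'m \<Rightarrow> real" where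
  "gb G x u v = u \<bullet> (G x *v v)"

definition metric_index :: "(real^'m \<Rightarrow> real^'m^'m) \<Rightarrow> real^'m \<Rightarrow> nat" where
  "metric_index G x = Max {dim V | V. subspace V \<and> (\<forall>v\<in>V. v \<noteq> 0 \<longrightarrow> gb G x v v < 0)}"

definition lie :: "(real^'m \<Rightarrow> real^'m) \<Rightarrow> (real^'m \<Rightarrow> real^'m) \<Rightarrow> real^'m \<Rightarrow> real^'m" where
  "lie X Y x = frechet_derivative Y (at x) (X x) - frechet_derivative X (at x) (Y x)"

definition phiF :: "(real^'m \<Rightarrow> real^'m^'m) \<Rightarrow> (real^'m \<Rightarrow> real^'m) \<Rightarrow> real^'m \<Rightarrow> real^'m" where
  "phiF Phi X = (\<lambda>y. Phi y *v X y)"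

definition nijenhuis :: "(real^'m \<Rightarrow> real^'m^'m) \<Rightarrow> (real^'m \<Rightarrow> real^'m) \<Rightarrow> (real^'m \<Rightarrow> real^'m) \<Rightarrow> real^'m \<Rightarrow> real^'m" where
  "nijenhuis Phi X Y x =
     Phi x *v (Phi x *v lie X Y x) + lie (phiF Phi X) (phiF Phi Y) x
     - Phi x *v lie (phiF Phi X) Y x - Phi x *v lie X (phiF Phi Y) x"

text \<open>Exterior derivative of a 1-form (Blair's convention, with factor 1/2):
  d eta(X,Y) = 1/2 (X(eta Y) - Y(eta X) - eta([X,Y])).  The 1-form is given by
  the vector field eta with eta(v) = eta x \<bullet> v.\<close>
definition d_form :: "(real^'m \<Rightarrow> real^'m) \<Rightarrow> (real^'m \<Rightarrow> real^'m) \<Rightarrow> (real^'m \<Rightarrow> real^'m) \<Rightarrow> real^'m \<Rightarrow> real" where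
  "d_form eta X Y x = (1/2) * (frechet_derivative (\<lambda>y. eta y \<bullet> Y y) (at x) (X x)
       - frechet_derivative (\<lambda>y. eta y \<bullet> X y) (at x) (Y x) - eta x \<bullet> lie X Y x)"

text \<open>Christoffel symbols of the Levi-Civita connection of G:
  Gamma(u,w) is the vector with g(Gamma(u,w), e_l) =
  1/2 ((D_u g)(w,e_l) + (D_w g)(u,e_l) - (D_{e_l} g)(u,w)).\<close>
definition christoffel :: "(real^'m \<Rightarrow> real^'m^'m) \<Rightarrow> real^'m \<Rightarrow> real^'m \<Rightarrow> real^'m \<Rightarrow> real^'m" where
  "christoffel G x u w = (1/2) *\<^sub>R (matrix_inv (G x) *v
     (\<chi> l. w \<bullet> (frechet_derivative G (at x) u *v axis l 1)
          + u \<bullet> (frechet_derivative G (at x) w *v axis l 1)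
          - u \<bullet> (frechet_derivative G (at x) (axis l 1) *v w)))"

text \<open>(nabla_u phi) w at x, for the Levi-Civita connection nabla of G.\<close>
definition nabla_phi :: "(real^'m \<Rightarrow> real^'m^'m) \<Rightarrow> (real^'m \<Rightarrow> real^'m^'m) \<Rightarrow> real^'m \<Rightarrow> real^'m \<Rightarrow> real^'m \<Rightarrow> real^'m" where
  "nabla_phi G Phi x u w = frechet_derivative Phi (at x) u *v w
     + christoffel G x u (Phi x *v w) - Phi x *v christoffel G x u w"

definition indef_S_manifold ::
  "(real^'m) set \<Rightarrow> nat \<Rightarrow> (real^'m \<Rightarrow> real^'m^'m) \<Rightarrow> ('r::finite \<Rightarrow> real^'m \<Rightarrow> real^'m)
   \<Rightarrow> ('r \<Rightarrow> real^'m \<Rightarrow> real^'m) \<Rightarrow> (real^'m \<Rightarrow> real^'m^'m) \<Rightarrow> bool" where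
  "indef_S_manifold U n Phi xi eta G \<longleftrightarrow>
     open U \<and> n > 0 \<and> CARD('m) = 2 * n + CARD('r) \<and>
     smooth_on U Phi \<and> smooth_on U G \<and> (\<forall>a. smooth_on U (xi a) \<and> smooth_on U (eta a)) \<and>
     (\<forall>x\<in>U.
        transpose (G x) = G x \<and> invertible (G x) \<and>
        0 < metric_index G x \<and> metric_index G x < CARD('m) \<and>
        rank (Phi x) = 2 * n \<and>
        (\<forall>v. Phi x *v (Phi x *v v) = - v + (\<Sum>a\<in>UNIV. (eta a x \<bullet> v) *\<^sub>R xi a x)) \<and>
        (\<forall>a b. eta a x \<bullet> xi b x = (if a = b then 1 else 0)) \<and>
        (\<forall>a. gb G x (xi a x) (xi a x) = 1 \<or> gb G x (xi a x) (xi a x) = -1) \<and>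
        (\<forall>u v. gb G x (Phi x *v u) (Phi x *v v) =
            gb G x u v - (\<Sum>a\<in>UNIV. gb G x (xi a x) (xi a x) * (eta a x \<bullet> u) * (eta a x \<bullet> v)))) \<and>
     (\<forall>X Y. smooth_on U X \<longrightarrow> smooth_on U Y \<longrightarrow>
        (\<forall>x\<in>U. nijenhuis Phi X Y x + (\<Sum>a\<in>UNIV. (2 * d_form (eta a) X Y x) *\<^sub>R xi a x) = 0 \<and>
                (\<forall>a. d_form (eta a) X Y x = gb G x (X x) (Phi x *v Y x))))"

definition rad_space :: "(real^'m \<Rightarrow> real^'m^'m) \<Rightarrow> real^'m \<Rightarrow> (real^'m) set \<Rightarrow> (real^'m) set" where
  "rad_space G x T = {v \<in> T. \<forall>w\<in>T. gb G x v w = 0}"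

text \<open>A characteristic lightlike hypersurface M = {x in U. F x = 0} (a local
  description on a coordinate neighbourhood), tangent spaces ker dF, screen
  distribution S, with sections E of Rad(TM) and N of ltr(M).\<close>
definition char_lightlike_hypersurface ::
  "(real^'m) set \<Rightarrow> (real^'m \<Rightarrow> real^'m^'m) \<Rightarrow> ('r \<Rightarrow> real^'m \<Rightarrow> real^'m)
   \<Rightarrow> (real^'m \<Rightarrow> real^'m^'m) \<Rightarrow> (real^'m \<Rightarrow> real) \<Rightarrow> (real^'m \<Rightarrow> (real^'m) set)
   \<Rightarrow> (real^'m \<Rightarrow> real^'m) \<Rightarrow> (real^'m \<Rightarrow> real^'m) \<Rightarrow> bool" where
  "char_lightlike_hypersurface U Phi xi G F S E N \<longleftrightarrow>
     smooth_on U F \<and> smooth_on U E \<and> smooth_on U N \<and>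
     (\<exists>k (W :: nat \<Rightarrow> real^'m \<Rightarrow> real^'m). (\<forall>i<k. smooth_on U (W i)) \<and>
        (\<forall>x\<in>U. F x = 0 \<longrightarrow> S x = span {W i x | i. i < k})) \<and>
     (\<forall>x\<in>U. F x = 0 \<longrightarrow>
        (let T = {v. frechet_derivative F (at x) v = 0} in
          frechet_derivative F (at x) \<noteq> (\<lambda>v. 0) \<and>
          dim (rad_space G x T) = 1 \<and>
          subspace (S x) \<and> S x \<subseteq> T \<and> rad_space G x T \<inter> S x = {0} \<and>
          T = {r + s | r s. r \<in> rad_space G x T \<and> s \<in> S x} \<and>
          E x \<in> rad_space G x T \<and> E x \<noteq> 0 \<and>
          gb G x (N x) (E x) = 1 \<and> gb G x (N x) (N x) = 0 \<and>
          (\<forall>s\<in>S x. gb G x (N x) s = 0) \<and>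
          (\<forall>a. xi a x \<in> T) \<and>
          {v. Phi x *v v = 0} \<subseteq> S x \<and>
          Phi x *v E x \<in> S x))"

definition D0 :: "(real^'m \<Rightarrow> real^'m^'m) \<Rightarrow> (real^'m \<Rightarrow> real^'m^'m) \<Rightarrow> (real^'m \<Rightarrow> (real^'m) set)
   \<Rightarrow> (real^'m \<Rightarrow> real^'m) \<Rightarrow> (real^'m \<Rightarrow> real^'m) \<Rightarrow> real^'m \<Rightarrow> (real^'m) set" where
  "D0 G Phi S E N x = {v \<in> S x. gb G x v (Phi x *v E x) = 0 \<and> gb G x v (Phi x *v N x) = 0}"

end

theory Submission
  imports Defs
begin


lemma final_alg:
  fixes B :: "'v::real_vector \<Rightarrow> 'v \<Rightarrow> 'v \<Rightarrow> real" and p :: "'v \<Rightarrow> 'v"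
    and gg :: "'v \<Rightarrow> 'v \<Rightarrow> real"
    and K :: "'r::finite \<Rightarrow> 'v \<Rightarrow> 'v \<Rightarrow> real" and et :: "'r \<Rightarrow> 'v \<Rightarrow> real"
    and xi :: "'r \<Rightarrow> 'v" and ep :: "'r \<Rightarrow> real"
  assumes lin3: "\<And>u a. linear (B u a)" and lin2: "\<And>u b. linear (\<lambda>a. B u a b)"
    and linK: "\<And>al u. linear (K al u)" and linp: "linear p" and linet: "\<And>al. linear (et al)"
    and ling: "\<And>u. linear (gg u)" and ggsym: "\<And>u v. gg u v = gg v u"
    and pp: "\<And>v. p (p v) = - v + (\<Sum>al\<in>UNIV. et al v *\<^sub>R xi al)"
    and pxi: "\<And>al. p (xi al) = 0" and etp: "\<And>al v. et al (p v) = 0"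
    and etxi: "\<And>al b. et al (xi b) = (if al = b then 1 else 0)"
    and gxp: "\<And>al v. gg (xi al) (p v) = 0"
    and T1: "\<And>u a b. B u a b = - B u b a"
    and T2: "\<And>u a b. B u (p a) b - B u a (p b) = (\<Sum>al\<in>UNIV. ep al * (K al u a * et al b + et al a * K al u b))"
    and T4: "\<And>u v w. B u v w + B v w u + B w u v = 0"
    and T5: "\<And>Y Z w. B (p Y) Z w - B (p Z) Y w + B Y Z (p w) - B Z Y (p w)
                 + 2 * gg Y (p Z) * (\<Sum>al\<in>UNIV. gg (xi al) w) = 0"
    and T6: "\<And>al u w. K al u w - K al w u = 2 * gg u (p w)"
    and T8: "\<And>u b c. B u (xi b) (xi c) = 0"
    and XZ: "gg X Z = 0" and YZ: "gg Y Z = 0" and etZ: "\<And>al. et al Z = 0"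
    and xiZ: "\<And>al. gg (xi al) Z = 0"
  shows "B X Y Z = 0"
proof -
  have pZ2: "p (p Z) = - Z" using pp[of Z] etZ by simp
  have S2: "B X (p Y) (p Z) = - B X Y Z + (\<Sum>al\<in>UNIV. ep al * (et al Y * K al X (p Z)))"
    using T2[of X Y "p Z"] etp pZ2 linear_neg[OF lin3] by simp
  have S3: "B (p Y) (p Z) X - B (p Y) Z (p X) = (\<Sum>al\<in>UNIV. ep al * (K al (p Y) Z * et al X))"
    using T2[of "p Y" Z X] etZ by simp
  have S4: "B (p Z) (p Y) X - B (p Z) Y (p X) =
      (\<Sum>al\<in>UNIV. ep al * (K al (p Z) Y * et al X + et al Y * K al (p Z) X))"
    using T2[of "p Z" Y X] by simp
  have S5: "B (p Y) Z (p X) - B (p Z) Y (p X) + B Y Z (p (p X)) - B Z Y (p (p X)) = 0"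
    using T5[of Y Z "p X"] gxp by simp
  have S6: "B Y Z (p (p X)) = - B Y Z X + (\<Sum>al\<in>UNIV. et al X * B Y Z (xi al))"
    by (simp add: pp linear_diff[OF lin3] linear_add[OF lin3] linear_neg[OF lin3] linear_sum[OF lin3] linear_scale[OF lin3])
  have S7: "B Z Y (p (p X)) = - B Z Y X + (\<Sum>al\<in>UNIV. et al X * B Z Y (xi al))"
    by (simp add: pp linear_diff[OF lin3] linear_add[OF lin3] linear_neg[OF lin3] linear_sum[OF lin3] linear_scale[OF lin3])
  have S8: "B (p Y) (p Z) X - B (p Z) (p Y) X = - B X (p Y) (p Z)"
    using T1[of "p Z" "p Y" X] T4[of X "p Y" "p Z"] by linarith
  have S9: "- B Y Z X + B Z Y X = B X Y Z"
    using T1[of Z Y X] T4[of X Y Z] by linarith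
  have B0: "\<And>u b. B u 0 b = 0" using linear_0[OF lin2] by simp
  have S10: "B Y Z (xi b) = - ep b * K b Y (p Z)" for b
  proof -
    have "p (- p Z) = Z" using linear_neg[OF linp] pZ2 by simp
    moreover have "\<And>al. et al (- p Z) = 0" using linear_neg[OF linet] etp by simp
    ultimately have h: "\<And>al. ep al * (K al Y (xi b) * et al (- p Z) + et al (xi b) * K al Y (- p Z)) = (if al = b then ep b * K b Y (- p Z) else 0)"
      using etxi by simp
    have "- B Y (xi b) Z = (\<Sum>al\<in>UNIV. (if al = b then ep b * K b Y (- p Z) else 0))"
      using T2[of Y "xi b" "- p Z"] pxi B0 \<open>p (- p Z) = Z\<close> by (simp only: h; simp)
    also have "\<dots> = ep b * K b Y (- p Z)" by simp
    finally show ?thesis using T1[of Y Z "xi b"] linear_neg[OF linK] by simp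
  qed
  have S11: "B Z Y (xi b) = - ep b * K b Z (p Y)" for b
  proof -
    have Ydec: "Y = p (- p Y) + (\<Sum>al\<in>UNIV. et al Y *\<^sub>R xi al)"
      using pp[of Y] linear_neg[OF linp] by simp
    have "B Z (xi b) Y = B Z (xi b) (p (- p Y)) + (\<Sum>al\<in>UNIV. et al Y * B Z (xi b) (xi al))"
      by (subst Ydec) (simp add: linear_add[OF lin3] linear_sum[OF lin3] linear_scale[OF lin3])
    also have "\<dots> = B Z (xi b) (p (- p Y))" using T8 by simp
    finally have e1: "B Z (xi b) Y = B Z (xi b) (p (- p Y))" .
    have "\<And>al. et al (- p Y) = 0" using linear_neg[OF linet] etp by simp
    then have h: "\<And>al. ep al * (K al Z (xi b) * et al (- p Y) + et al (xi b) * K al Z (- p Y)) = (if al = b then ep b * K b Z (- p Y) else 0)"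
      using etxi by simp
    have "- B Z (xi b) (p (- p Y)) = (\<Sum>al\<in>UNIV. (if al = b then ep b * K b Z (- p Y) else 0))"
      using T2[of Z "xi b" "- p Y"] pxi B0 by (simp only: h; simp)
    also have "\<dots> = ep b * K b Z (- p Y)" by simp
    finally show ?thesis using e1 T1[of Z Y "xi b"] linear_neg[OF linK] by simp
  qed
  have K1: "K al X (p Z) - K al (p Z) X = 0" for al using T6[of al X "p Z"] pZ2 XZ linear_neg[OF ling] by simp
  have K2: "K al Y (p Z) - K al (p Z) Y = 0" for al using T6[of al Y "p Z"] pZ2 YZ linear_neg[OF ling] by simp
  have K3: "K al Z (p Y) - K al (p Y) Z = 0" for al
  proof -
    have "gg Z (p (p Y)) = 0"
      using pp[of Y] YZ xiZ ggsym
      by (simp add: linear_diff[OF ling] linear_add[OF ling] linear_neg[OF ling] linear_sum[OF ling] linear_scale[OF ling])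
    then show ?thesis using T6[of al Z "p Y"] by simp
  qed
  let ?Sa = "\<Sum>al\<in>UNIV. ep al * (et al Y * K al X (p Z))"
  let ?Sb = "\<Sum>al\<in>UNIV. ep al * (K al (p Y) Z * et al X)"
  let ?Sc = "\<Sum>al\<in>UNIV. ep al * (K al (p Z) Y * et al X + et al Y * K al (p Z) X)"
  let ?Sd = "\<Sum>al\<in>UNIV. et al X * B Z Y (xi al)"
  let ?Se = "\<Sum>al\<in>UNIV. et al X * B Y Z (xi al)"
  have main: "2 * B X Y Z = ?Sa + ?Sb - ?Sc - ?Se + ?Sd"
    using S2 S3 S4 S5 S6 S7 S8 S9 by linarith
  have "?Sa + ?Sb - ?Sc - ?Se + ?Sd = (\<Sum>al\<in>UNIV. ep al * (et al Y * K al X (p Z)) + ep al * (K al (p Y) Z * et al X)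
      - ep al * (K al (p Z) Y * et al X + et al Y * K al (p Z) X) - et al X * B Y Z (xi al) + et al X * B Z Y (xi al))"
    by (simp add: sum.distrib sum_subtractf)
  also have "\<dots> = (\<Sum>al\<in>UNIV. ep al * et al Y * (K al X (p Z) - K al (p Z) X)
      + ep al * et al X * ((K al Y (p Z) - K al (p Z) Y) - (K al Z (p Y) - K al (p Y) Z)))"
    by (rule sum.cong) (auto simp: S10 S11 algebra_simps)
  also have "\<dots> = 0" using K1 K2 K3 by simp
  finally show ?thesis using main by simp
qed

definition kosz :: "('v \<Rightarrow> 'v \<Rightarrow> 'v \<Rightarrow> real) \<Rightarrow> 'v \<Rightarrow> 'v \<Rightarrow> 'v \<Rightarrow> real" where
  "kosz q u w z = (q u w z + q w u z - q z u w) / 2"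

definition Bf :: "('v \<Rightarrow> 'v \<Rightarrow> 'v \<Rightarrow> real) \<Rightarrow> ('v \<Rightarrow> 'v \<Rightarrow> real) \<Rightarrow> ('v \<Rightarrow> 'v \<Rightarrow> 'v)
    \<Rightarrow> ('v \<Rightarrow> 'v) \<Rightarrow> 'v \<Rightarrow> 'v \<Rightarrow> 'v \<Rightarrow> real" where
  "Bf q gg Pm p u a b = gg (Pm u a) b + kosz q u (p a) b + kosz q u a (p b)"

lemma nabla_alg:
  fixes q :: "'v::real_vector \<Rightarrow> 'v \<Rightarrow> 'v \<Rightarrow> real" and p :: "'v \<Rightarrow> 'v"
    and gg :: "'v \<Rightarrow> 'v \<Rightarrow> real" and Pm :: "'v \<Rightarrow> 'v \<Rightarrow> 'v"
    and he :: "'r::finite \<Rightarrow> 'v \<Rightarrow> 'v \<Rightarrow> real" and hx :: "'r \<Rightarrow> 'v \<Rightarrow> 'v"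
    and et :: "'r \<Rightarrow> 'v \<Rightarrow> real"
    and xi :: "'r \<Rightarrow> 'v" and ep :: "'r \<Rightarrow> real"
  assumes linq1: "\<And>a b. linear (\<lambda>u. q u a b)" and linq2: "\<And>u b. linear (\<lambda>a. q u a b)"
    and linq3: "\<And>u a. linear (q u a)" and qsym: "\<And>u a b. q u a b = q u b a"
    and ling: "\<And>u. linear (gg u)" and ggsym: "\<And>u v. gg u v = gg v u"
    and linP: "\<And>u. linear (Pm u)" and linp: "linear p" and linet: "\<And>al. linear (et al)"
    and linhe: "\<And>al u. linear (he al u)"
    and pp: "\<And>v. p (p v) = - v + (\<Sum>al\<in>UNIV. et al v *\<^sub>R xi al)"
    and pxi: "\<And>al. p (xi al) = 0" and etp: "\<And>al v. et al (p v) = 0"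
    and etxi: "\<And>al b. et al (xi b) = (if al = b then 1 else 0)"
    and skew: "\<And>a b. gg (p a) b = - gg a (p b)"
    and ep2: "\<And>al. ep al * ep al = 1"
    and F1: "\<And>u a b. q u a (p b) + gg a (Pm u b) + q u b (p a) + gg b (Pm u a) = 0"
    and F2: "\<And>u a b. gg (Pm u a) (p b) + q u (p a) (p b) + gg (p a) (Pm u b)
               = q u a b - (\<Sum>al\<in>UNIV. ep al * (he al u a * et al b + et al a * he al u b))"
    and F3: "\<And>u v w. q u v (p w) + gg v (Pm u w) + q v w (p u) + gg w (Pm v u)
               + q w u (p v) + gg u (Pm w v) = 0"
    and F4: "\<And>u b. Pm u (xi b) = - p (hx b u)"
    and F5: "\<And>al u w. he al u w - he al w u = 2 * gg u (p w)"
    and F6: "\<And>Y Z. Pm (p Y) Z - Pm (p Z) Y + p (Pm Z Y) - p (Pm Y Z)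
               + (\<Sum>al\<in>UNIV. (2 * gg Y (p Z)) *\<^sub>R xi al) = 0"
    and XZ: "gg X Z = 0" and YZ: "gg Y Z = 0" and etZ: "\<And>al. et al Z = 0"
    and xiZ: "\<And>al. gg (xi al) Z = 0"
  shows "Bf q gg Pm p X Y Z = 0"
proof -
  let ?k = "kosz q"
  let ?B = "Bf q gg Pm p"
  define K where "K al u w = he al u w - ep al * ?k u w (xi al)" for al u w
  have q0: "q u a 0 = 0" "q u 0 b = 0" "q 0 a b = 0" for u a b
    using linear_0[OF linq3] linear_0[OF linq2] linear_0[OF linq1] by auto
  have kos_lin3: "linear (?k u w)" for u w
    unfolding kosz_def
    by (rule linearI) (simp_all add: linear_add[OF linq3] linear_add[OF linq1] linear_scale[OF linq3]
          linear_scale[OF linq1] algebra_simps add_divide_distrib diff_divide_distrib)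
  have kos_lin2: "linear (\<lambda>w. ?k u w z)" for u z
    unfolding kosz_def
    by (rule linearI) (simp_all add: linear_add[OF linq2] linear_add[OF linq1] linear_add[OF linq3]
          linear_scale[OF linq2] linear_scale[OF linq1] linear_scale[OF linq3] algebra_simps add_divide_distrib diff_divide_distrib)
  have kos_sym: "?k u w z = ?k w u z" for u w z unfolding kosz_def using qsym[of z u w] by simp
  have kos_sum: "?k u a b + ?k u b a = q u a b" for u a b
    unfolding kosz_def using qsym[of a u b] qsym[of b u a] qsym[of u a b] by (simp add: field_simps)
  have gg_lin1: "linear (\<lambda>a. gg a b)" for b
  proof -
    have "(\<lambda>a. gg a b) = gg b" by (rule ext) (rule ggsym)
    then show ?thesis using ling[of b] by simp
  qed
  have lin3: "linear (?B u a)" for u a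
    unfolding Bf_def
    by (rule linearI) (simp_all add: linear_add[OF ling] linear_scale[OF ling] linear_add[OF kos_lin3]
          linear_scale[OF kos_lin3] linear_add[OF linp] linear_scale[OF linp] algebra_simps)
  have lin2: "linear (\<lambda>a. ?B u a b)" for u b
    unfolding Bf_def
    by (rule linearI) (simp_all add: linear_add[OF gg_lin1] linear_scale[OF gg_lin1] linear_add[OF kos_lin2]
          linear_scale[OF kos_lin2] linear_add[OF linp] linear_scale[OF linp]
          linear_add[OF linP] linear_scale[OF linP] algebra_simps)
  have linK: "linear (K al u)" for al u
    unfolding K_def
    by (rule linearI) (simp_all add: linear_add[OF linhe] linear_scale[OF linhe] linear_add[OF kos_lin2]
          linear_scale[OF kos_lin2] algebra_simps)
  have epm: "ep al * (ep al * t) = t" for al t by (metis ep2 mult.assoc mult_1)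
  have gxp: "gg (xi al) (p v) = 0" for al v using skew[of "xi al" v] pxi linear_0[OF gg_lin1] by simp
  have T1: "?B u a b = - ?B u b a" for u a b
  proof -
    have "?B u a b + ?B u b a = 0"
      unfolding Bf_def using kos_sum[of u "p a" b] kos_sum[of u a "p b"] F1[of u a b] ggsym qsym
      by (smt (verit))
    then show ?thesis by simp
  qed
  have T2s: "?B u a (p b) + ?B u b (p a) = - (\<Sum>al\<in>UNIV. ep al * (K al u a * et al b + et al a * K al u b))" for u a b
  proof -
    have e1: "?k u a (p (p b)) = - ?k u a b + (\<Sum>al\<in>UNIV. et al b * ?k u a (xi al))" for a b
      by (simp add: pp linear_diff[OF kos_lin3] linear_add[OF kos_lin3] linear_neg[OF kos_lin3] linear_sum[OF kos_lin3] linear_scale[OF kos_lin3])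
    have "?B u a (p b) + ?B u b (p a) = gg (Pm u a) (p b) + gg (Pm u b) (p a) + q u (p a) (p b) - q u a b
        + (\<Sum>al\<in>UNIV. et al b * ?k u a (xi al)) + (\<Sum>al\<in>UNIV. et al a * ?k u b (xi al))"
      unfolding Bf_def using e1[of a b] e1[of b a] kos_sum[of u "p a" "p b"] kos_sum[of u a b] by simp
    also have "\<dots> = - (\<Sum>al\<in>UNIV. ep al * (he al u a * et al b + et al a * he al u b))
        + (\<Sum>al\<in>UNIV. et al b * ?k u a (xi al)) + (\<Sum>al\<in>UNIV. et al a * ?k u b (xi al))"
      using F2[of u a b] ggsym[of "Pm u b" "p a"] by simp
    also have "\<dots> = - (\<Sum>al\<in>UNIV. ep al * (K al u a * et al b + et al a * K al u b))"
    proof -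
      have "ep al * (K al u a * et al b + et al a * K al u b) = ep al * (he al u a * et al b + et al a * he al u b)
          - et al b * ?k u a (xi al) - et al a * ?k u b (xi al)" for al
        unfolding K_def by (simp add: algebra_simps epm)
      then show ?thesis by (simp add: sum.distrib sum_subtractf)
    qed
    finally show ?thesis .
  qed
  have T2: "?B u (p a) b - ?B u a (p b) = (\<Sum>al\<in>UNIV. ep al * (K al u a * et al b + et al a * K al u b))" for u a b
    using T2s[of u a b] T1[of u "p a" b] by simp
  have T4: "?B u v w + ?B v w u + ?B w u v = 0" for u v w
  proof -
    have c: "?B u v w = gg (Pm u v) w + ?k u (p v) w + ?k u v (p w)" for u v w unfolding Bf_def by simp
    have s1: "?k u (p v) w + ?k w u (p v) = q u (p v) w" for u v w using kos_sym[of w u "p v"] kos_sum[of u "p v" w] by simp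
    have "?B u v w + ?B v w u + ?B w u v = (gg (Pm u v) w + q u (p v) w) + (gg (Pm v w) u + q v (p w) u)
          + (gg (Pm w u) v + q w (p u) v)"
      unfolding c using s1[of u v w] s1[of v w u] s1[of w u v] by simp
    also have "\<dots> = 0"
      using F1[of u v w] F1[of v w u] F1[of w u v] F3[of u v w] ggsym qsym by (smt (verit))
    finally show ?thesis .
  qed
  have T5: "?B (p Y) Z w - ?B (p Z) Y w + ?B Y Z (p w) - ?B Z Y (p w)
                 + 2 * gg Y (p Z) * (\<Sum>al\<in>UNIV. gg (xi al) w) = 0" for Y Z w
  proof -
    have "?B (p Y) Z w - ?B (p Z) Y w + ?B Y Z (p w) - ?B Z Y (p w)
        = gg (Pm (p Y) Z) w - gg (Pm (p Z) Y) w + gg (Pm Y Z) (p w) - gg (Pm Z Y) (p w)"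
      unfolding Bf_def using kos_sym by simp
    also have "\<dots> = gg (Pm (p Y) Z - Pm (p Z) Y + p (Pm Z Y) - p (Pm Y Z)) w"
      using skew[of "Pm Y Z" w] skew[of "Pm Z Y" w]
      by (simp add: linear_add[OF gg_lin1] linear_diff[OF gg_lin1])
    also have "\<dots> = gg (- (\<Sum>al\<in>UNIV. (2 * gg Y (p Z)) *\<^sub>R xi al)) w"
      using F6[of Y Z] by (metis add_diff_cancel_left' diff_0 diff_add_cancel)
    also have "\<dots> = - 2 * gg Y (p Z) * (\<Sum>al\<in>UNIV. gg (xi al) w)"
      by (simp add: linear_neg[OF gg_lin1] linear_sum[OF gg_lin1] linear_scale[OF gg_lin1] sum_distrib_left sum_negf)
    finally show ?thesis by simp
  qed
  have T6: "K al u w - K al w u = 2 * gg u (p w)" for al u w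
    unfolding K_def using F5[of al u w] kos_sym[of u w "xi al"] by simp
  have T8: "?B u (xi b) (xi c) = 0" for u b c
    unfolding Bf_def using F4[of u b] pxi skew[of "hx b u" "xi c"] linear_0[OF kos_lin2] linear_0[OF kos_lin3]
      linear_0[OF ling] linear_neg[OF gg_lin1] by simp
  show ?thesis
    by (rule final_alg[OF lin3 lin2 linK linp linet ling ggsym pp pxi etp etxi gxp
          T1 T2 T4 T5 T6 T8 XZ YZ etZ xiZ])
qed


lemma line_deriv:
  fixes f :: "'a::real_normed_vector \<Rightarrow> real"
  assumes "(f has_derivative F) (at (a + s *\<^sub>R v))"
  shows "((\<lambda>s. f (a + s *\<^sub>R v)) has_field_derivative F v) (at s)"
proof -
  have l: "((\<lambda>s. a + s *\<^sub>R v) has_derivative (\<lambda>h. h *\<^sub>R v)) (at s)"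
    by (auto intro!: derivative_eq_intros)
  have "((f \<circ> (\<lambda>s. a + s *\<^sub>R v)) has_derivative (F \<circ> (\<lambda>h. h *\<^sub>R v))) (at s)"
    by (rule diff_chain_at[OF l assms])
  moreover have "linear F" using has_derivative_linear[OF assms] .
  ultimately show ?thesis
    by (intro has_derivative_imp_has_field_derivative[where D="F \<circ> (\<lambda>h. h *\<^sub>R v)"])
       (auto simp: o_def linear_scale)
qed

lemma schwarz_aux:
  fixes f :: "'a::real_normed_vector \<Rightarrow> real"
  assumes Df: "\<And>y. y \<in> U \<Longrightarrow> (f has_derivative F y) (at y)"
    and DF: "\<And>y. y \<in> U \<Longrightarrow> ((\<lambda>z. F z a) has_derivative G y) (at y)"
    and sub: "ball x d \<subseteq> U" and t: "0 < t" "2*t < d" and na: "norm a = 1" "norm b = 1"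
  shows "\<exists>p. dist p x \<le> 2*t \<and>
    f (x + t *\<^sub>R a + t *\<^sub>R b) - f (x + t *\<^sub>R a) - f (x + t *\<^sub>R b) + f x = t * t * G p b"
proof -
  have inU: "x + s *\<^sub>R a + r *\<^sub>R b \<in> U" and dle: "dist (x + s *\<^sub>R a + r *\<^sub>R b) x \<le> 2*t"
    if "0 \<le> s" "s \<le> t" "0 \<le> r" "r \<le> t" for s r
  proof -
    have "dist (x + s *\<^sub>R a + r *\<^sub>R b) x = norm (s *\<^sub>R a + r *\<^sub>R b)"
      by (simp add: dist_norm)
    also have "\<dots> \<le> norm (s *\<^sub>R a) + norm (r *\<^sub>R b)" by (rule norm_triangle_ineq)
    also have "\<dots> = s + r" using that na by simp
    finally have "dist (x + s *\<^sub>R a + r *\<^sub>R b) x \<le> s + r" .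
    then show "dist (x + s *\<^sub>R a + r *\<^sub>R b) x \<le> 2*t" using that by linarith
    then have "x + s *\<^sub>R a + r *\<^sub>R b \<in> ball x d" using t by (simp add: dist_commute)
    then show "x + s *\<^sub>R a + r *\<^sub>R b \<in> U" using sub by blast
  qed
  define ph where "ph s = f (x + t *\<^sub>R b + s *\<^sub>R a) - f (x + s *\<^sub>R a)" for s
  have dph: "DERIV ph s :> (F (x + s *\<^sub>R a + t *\<^sub>R b) a - F (x + s *\<^sub>R a) a)"
    if "0 \<le> s" "s \<le> t" for s
  proof -
    have u1: "x + t *\<^sub>R b + s *\<^sub>R a \<in> U" using inU[of s t] that t by (simp add: add_ac)
    have u2: "x + s *\<^sub>R a \<in> U" using inU[of s 0] that t by simp
    have e: "x + t *\<^sub>R b + s *\<^sub>R a = x + s *\<^sub>R a + t *\<^sub>R b" by (simp add: add_ac)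
    show ?thesis unfolding ph_def
      using DERIV_diff[OF line_deriv[OF Df[OF u1]] line_deriv[of f "F (x + s *\<^sub>R a)" x s a]] Df[OF u2] e
      by simp
  qed
  have "\<exists>z::real. 0 < z \<and> z < t \<and> ph t - ph 0 = (t - 0) * (F (x + z *\<^sub>R a + t *\<^sub>R b) a - F (x + z *\<^sub>R a) a)"
    by (rule MVT2[OF t(1)]) (rule dph)
  then obtain sg where sg: "0 < sg" "sg < t" "ph t - ph 0 = (t - 0) * (F (x + sg *\<^sub>R a + t *\<^sub>R b) a - F (x + sg *\<^sub>R a) a)"
    by (elim exE conjE)
  define ps where "ps r = F (x + sg *\<^sub>R a + r *\<^sub>R b) a" for r
  have dps: "DERIV ps r :> G (x + sg *\<^sub>R a + r *\<^sub>R b) b" if "0 \<le> r" "r \<le> t" for r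
  proof -
    have u: "x + sg *\<^sub>R a + r *\<^sub>R b \<in> U" using inU[of sg r] that sg by simp
    show ?thesis unfolding ps_def using line_deriv[OF DF[OF u]] .
  qed
  have "\<exists>z::real. 0 < z \<and> z < t \<and> ps t - ps 0 = (t - 0) * G (x + sg *\<^sub>R a + z *\<^sub>R b) b"
    by (rule MVT2[OF t(1)]) (rule dps)
  then obtain tau where tau: "0 < tau" "tau < t" "ps t - ps 0 = (t - 0) * G (x + sg *\<^sub>R a + tau *\<^sub>R b) b"
    by (elim exE conjE)
  have "f (x + t *\<^sub>R a + t *\<^sub>R b) - f (x + t *\<^sub>R a) - f (x + t *\<^sub>R b) + f x = ph t - ph 0"
    unfolding ph_def by (simp add: add_ac)
  also have "\<dots> = t * (ps t - ps 0)" using sg(3) unfolding ps_def by simp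
  also have "\<dots> = t * t * G (x + sg *\<^sub>R a + tau *\<^sub>R b) b" using tau(3) by simp
  finally show ?thesis using dle[of sg tau] sg tau by (intro exI[of _ "x + sg *\<^sub>R a + tau *\<^sub>R b"]) auto
qed

lemma schwarz:
  fixes f :: "'a::real_normed_vector \<Rightarrow> real"
  assumes U: "open U" "x \<in> U"
    and Df: "\<And>y. y \<in> U \<Longrightarrow> (f has_derivative F y) (at y)"
    and DFa: "\<And>y. y \<in> U \<Longrightarrow> ((\<lambda>z. F z a) has_derivative Ga y) (at y)"
    and DFb: "\<And>y. y \<in> U \<Longrightarrow> ((\<lambda>z. F z b) has_derivative Gb y) (at y)"
    and ca: "continuous_on U (\<lambda>y. Ga y b)" and cb: "continuous_on U (\<lambda>y. Gb y a)"
    and na: "norm a = 1" "norm b = 1"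
  shows "Ga x b = Gb x a"
proof (rule ccontr)
  assume ne: "Ga x b \<noteq> Gb x a"
  define e where "e = \<bar>Ga x b - Gb x a\<bar> / 2"
  have e: "e > 0" using ne unfolding e_def by simp
  have "\<exists>d0>0. ball x d0 \<subseteq> U" using U unfolding open_contains_ball by simp
  then obtain d0 where d0: "d0 > 0" "ball x d0 \<subseteq> U" by (elim exE conjE)
  have cxa: "continuous (at x) (\<lambda>y. Ga y b)" using ca U by (simp add: continuous_on_eq_continuous_at)
  have cxb: "continuous (at x) (\<lambda>y. Gb y a)" using cb U by (simp add: continuous_on_eq_continuous_at)
  obtain d1 where d1: "d1 > 0" "\<And>y. dist y x < d1 \<Longrightarrow> dist (Ga y b) (Ga x b) < e"
    using cxa e unfolding continuous_at_eps_delta by (metis (no_types, lifting))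
  obtain d2 where d2: "d2 > 0" "\<And>y. dist y x < d2 \<Longrightarrow> dist (Gb y a) (Gb x a) < e"
    using cxb e unfolding continuous_at_eps_delta by (metis (no_types, lifting))
  define t where "t = min d0 (min d1 d2) / 4"
  have t: "0 < t" "2*t < d0" "2*t < d1" "2*t < d2" using d0 d1 d2 unfolding t_def by auto
  have "\<exists>p. dist p x \<le> 2*t \<and>
    f (x + t *\<^sub>R a + t *\<^sub>R b) - f (x + t *\<^sub>R a) - f (x + t *\<^sub>R b) + f x = t * t * Ga p b"
    by (rule schwarz_aux[OF _ _ d0(2) t(1,2) na]) (erule Df, erule DFa)
  then obtain p where p: "dist p x \<le> 2*t"
    "f (x + t *\<^sub>R a + t *\<^sub>R b) - f (x + t *\<^sub>R a) - f (x + t *\<^sub>R b) + f x = t * t * Ga p b"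
    by (elim exE conjE)
  have "\<exists>p'. dist p' x \<le> 2*t \<and>
    f (x + t *\<^sub>R b + t *\<^sub>R a) - f (x + t *\<^sub>R b) - f (x + t *\<^sub>R a) + f x = t * t * Gb p' a"
    by (rule schwarz_aux[OF _ _ d0(2) t(1,2) na(2,1)]) (erule Df, erule DFb)
  then obtain p' where p': "dist p' x \<le> 2*t"
    "f (x + t *\<^sub>R b + t *\<^sub>R a) - f (x + t *\<^sub>R b) - f (x + t *\<^sub>R a) + f x = t * t * Gb p' a"
    by (elim exE conjE)
  have xe: "x + t *\<^sub>R b + t *\<^sub>R a = x + t *\<^sub>R a + t *\<^sub>R b" by (simp add: add_ac)
  have "t * t * Ga p b = t * t * Gb p' a" using p(2) p'(2) unfolding xe by linarith
  then have eq: "Ga p b = Gb p' a" using t(1) by simp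
  have a1: "\<bar>Ga p b - Ga x b\<bar> < e" using d1(2)[of p] p(1) t unfolding dist_real_def by linarith
  have a2: "\<bar>Gb p' a - Gb x a\<bar> < e" using d2(2)[of p'] p'(1) t unfolding dist_real_def by linarith
  have a3: "2 * e = \<bar>Ga x b - Gb x a\<bar>" unfolding e_def by simp
  show False using a1 a2 a3 eq by (smt (verit))
qed


section \<open>Smoothness basics\<close>

lemma smoothk_const: "smoothk k U (\<lambda>y. c)"
proof (induction k arbitrary: c)
  case 0 then show ?case by simp
next
  case (Suc k)
  have "frechet_derivative (\<lambda>y. c) (at y) = (\<lambda>h. 0)" for y
    by (rule frechet_derivative_at[symmetric]) (rule has_derivative_const)
  then show ?case using Suc by simp
qed

lemma smooth_const: "smooth_on U (\<lambda>y. c)"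
  unfolding smooth_on_def using smoothk_const by blast

lemma smooth_hasderiv:
  assumes "smooth_on U f" "open U" "y \<in> U"
  shows "(f has_derivative frechet_derivative f (at y)) (at y)"
proof -
  have "smoothk (Suc 0) U f" using assms(1) unfolding smooth_on_def by blast
  then have "f differentiable_on U" by simp
  then have "f differentiable (at y)" using assms(2,3) differentiable_on_eq_differentiable_at by blast
  then show ?thesis using frechet_derivative_works by blast
qed

lemma smooth_partial:
  assumes "smooth_on U f"
  shows "smooth_on U (\<lambda>y. frechet_derivative f (at y) (axis i 1))"
  unfolding smooth_on_def
proof
  fix k
  have "smoothk (Suc k) U f" using assms unfolding smooth_on_def by blast
  then show "smoothk k U (\<lambda>y. frechet_derivative f (at y) (axis i 1))" by simp
qed

lemma smooth_cont: "smooth_on U f \<Longrightarrow> continuous_on U f"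
  unfolding smooth_on_def by (metis smoothk.simps(1))

lemma deriv_const_on:
  assumes "(f has_derivative f') (at x)" "open U" "x \<in> U" "\<And>y. y \<in> U \<Longrightarrow> f y = c"
  shows "f' h = 0"
proof -
  have "((\<lambda>y. c) has_derivative (\<lambda>h. 0)) (at x)" by (rule has_derivative_const)
  then have "(f has_derivative (\<lambda>h. 0)) (at x)"
    by (rule has_derivative_transform_within_open[OF _ assms(2,3)]) (simp add: assms(4))
  then have "f' = (\<lambda>h. 0)" using has_derivative_unique assms(1) by blast
  then show ?thesis by simp
qed

section \<open>Matrix-vector products\<close>

lemma scaleR_mv: "(c *\<^sub>R (A::real^'n^'m)) *v v = c *\<^sub>R (A *v v)"
  by (simp add: vec_eq_iff matrix_vector_mult_def sum_distrib_left algebra_simps)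

lemma bilinear_mv: "bilinear (\<lambda>(A::real^'n^'m) (v::real^'n). A *v v)"
  unfolding bilinear_def
  by (auto intro!: linearI simp: matrix_vector_mult_add_rdistrib scaleR_mv matrix_vector_right_distrib
      matrix_vector_mult_scaleR)

lemma sum_mv: "(sum f S) *v (w::real^'n) = sum (\<lambda>l. (f l :: real^'n^'m) *v w) S"
proof -
  have "linear (\<lambda>A::real^'n^'m. A *v w)" using bilinear_mv unfolding bilinear_def by blast
  from linear_sum[OF this] show ?thesis .
qed

lemma bb_mv: "bounded_bilinear (\<lambda>(A::real^'n^'m) (v::real^'n). A *v v)"
  using bilinear_mv bilinear_conv_bounded_bilinear by blast

lemma hd_mv:
  fixes A :: "'a::real_normed_vector \<Rightarrow> real^'n^'m" and v :: "'a \<Rightarrow> real^'n"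
  assumes "(A has_derivative A') (at x)" "(v has_derivative v') (at x)"
  shows "((\<lambda>y. A y *v v y) has_derivative (\<lambda>h. A x *v v' h + A' h *v v x)) (at x)"
  using bounded_bilinear.FDERIV[OF bb_mv assms] by simp

lemma hd_mvc:
  fixes A :: "'a::real_normed_vector \<Rightarrow> real^'n^'m"
  assumes "(A has_derivative A') (at x)"
  shows "((\<lambda>y. A y *v c) has_derivative (\<lambda>h. A' h *v c)) (at x)"
  using hd_mv[OF assms has_derivative_const[of c]] by simp

lemma fd_mvc:
  fixes A :: "'a::real_normed_vector \<Rightarrow> real^'n^'m"
  assumes "(A has_derivative A') (at x)"
  shows "frechet_derivative (\<lambda>y. A y *v c) (at x) = (\<lambda>h. A' h *v c)"
  using frechet_derivative_at[OF hd_mvc[OF assms]] by simp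

lemma fd_inc:
  fixes f :: "'a::real_normed_vector \<Rightarrow> real^'n"
  assumes "(f has_derivative f') (at x)"
  shows "frechet_derivative (\<lambda>y. f y \<bullet> c) (at x) = (\<lambda>h. f' h \<bullet> c)"
proof -
  have "((\<lambda>y. f y \<bullet> c) has_derivative (\<lambda>h. f' h \<bullet> c)) (at x)"
    using has_derivative_inner[OF assms has_derivative_const[of c]] by simp
  then show ?thesis using frechet_derivative_at by metis
qed

lemma fd_const: "frechet_derivative (\<lambda>y. c) (at x) = (\<lambda>h. 0)"
  by (rule frechet_derivative_at[symmetric]) (rule has_derivative_const)

lemma hd_gphi:
  fixes G Phi :: "real^'m \<Rightarrow> real^'m^'m"
  assumes "(G has_derivative Q) (at x)" "(Phi has_derivative P) (at x)"
  shows "((\<lambda>y. a \<bullet> (G y *v (Phi y *v b))) has_derivative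
           (\<lambda>h. a \<bullet> (G x *v (P h *v b)) + a \<bullet> (Q h *v (Phi x *v b)))) (at x)"
proof -
  have "((\<lambda>y. G y *v (Phi y *v b)) has_derivative (\<lambda>h. G x *v (P h *v b) + Q h *v (Phi x *v b))) (at x)"
    by (rule hd_mv[OF assms(1) hd_mvc[OF assms(2)]])
  from has_derivative_inner[OF has_derivative_const[of a] this]
  show ?thesis by (simp add: inner_add_right)
qed

section \<open>Metric facts\<close>

lemma gb_sym: "transpose (G x) = G x \<Longrightarrow> gb G x u v = gb G x v u"
  unfolding gb_def by (metis dot_lmul_matrix inner_commute transpose_matrix_vector)

lemma sym_mat_inner: "transpose A = A \<Longrightarrow> u \<bullet> ((A::real^'n^'n) *v v) = v \<bullet> (A *v u)"
  by (metis dot_lmul_matrix inner_commute transpose_matrix_vector)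

lemma transpose_linear: "linear (transpose :: real^'n^'m \<Rightarrow> real^'m^'n)"
  by (rule linearI) (simp_all add: transpose_def vec_eq_iff)

lemma deriv_sym:
  assumes "(G has_derivative Q) (at x)" "open U" "x \<in> U"
    and "\<And>y. y \<in> U \<Longrightarrow> transpose (G y) = (G y :: real^'m^'m)"
  shows "transpose (Q h) = Q h"
proof -
  have bl: "bounded_linear (transpose :: real^'m^'m \<Rightarrow> real^'m^'m)"
    using transpose_linear linear_conv_bounded_linear by blast
  have "((\<lambda>y. transpose (G y)) has_derivative (\<lambda>h. transpose (Q h))) (at x)"
    using bounded_linear.has_derivative[OF bl assms(1)] .
  then have "(G has_derivative (\<lambda>h. transpose (Q h))) (at x)"
    by (rule has_derivative_transform_within_open[OF _ assms(2,3)]) (simp add: assms(4))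
  then have "(\<lambda>h. transpose (Q h)) = Q" using has_derivative_unique assms(1) by blast
  then show ?thesis by metis
qed

lemma christoffel_kos:
  fixes G :: "real^'m \<Rightarrow> real^'m^'m"
  assumes sym: "transpose (G x) = G x" and inv: "invertible (G x)"
    and linQ: "linear (frechet_derivative G (at x))"
  shows "gb G x (christoffel G x u w) z =
     (w \<bullet> (frechet_derivative G (at x) u *v z) + u \<bullet> (frechet_derivative G (at x) w *v z)
      - u \<bullet> (frechet_derivative G (at x) z *v w)) / 2"
proof -
  let ?Q = "frechet_derivative G (at x)"
  define c where "c = (\<chi> l. w \<bullet> (?Q u *v axis l 1) + u \<bullet> (?Q w *v axis l 1) - u \<bullet> (?Q (axis l 1) *v w))"
  have h1: "(\<Sum>l\<in>UNIV. z $ l * (w' \<bullet> (A *v axis l 1))) = w' \<bullet> (A *v z)" for A :: "real^'m^'m" and w'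
  proof -
    have "w' \<bullet> (A *v z) = w' \<bullet> (A *v (\<Sum>l\<in>UNIV. z $ l *\<^sub>R axis l 1))"
      using basis_expansion[of z] by (simp add: scalar_mult_eq_scaleR)
    also have "\<dots> = (\<Sum>l\<in>UNIV. z $ l * (w' \<bullet> (A *v axis l 1)))"
      by (simp add: linear_sum[OF matrix_vector_mul_linear] matrix_vector_mult_scaleR inner_sum_right)
    finally show ?thesis by simp
  qed
  have gm: "G x ** matrix_inv (G x) = mat 1"
    using inv unfolding invertible_def matrix_inv_def by (metis (mono_tags, lifting) someI_ex)
  have "gb G x (christoffel G x u w) z = (1/2) * ((matrix_inv (G x) *v c) \<bullet> (G x *v z))"
    unfolding gb_def christoffel_def c_def by simp
  also have "(matrix_inv (G x) *v c) \<bullet> (G x *v z) = (G x *v (matrix_inv (G x) *v c)) \<bullet> z"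
    using sym_mat_inner[OF sym] by (metis inner_commute)
  also have "\<dots> = c \<bullet> z" by (simp add: matrix_vector_mul_assoc gm)
  also have "c \<bullet> z = (\<Sum>l\<in>UNIV. z $ l * (w \<bullet> (?Q u *v axis l 1)))
      + (\<Sum>l\<in>UNIV. z $ l * (u \<bullet> (?Q w *v axis l 1))) - (\<Sum>l\<in>UNIV. z $ l * (u \<bullet> (?Q (axis l 1) *v w)))"
    unfolding c_def inner_vec_def by (simp add: algebra_simps sum.distrib sum_subtractf)
  also have "\<dots> = w \<bullet> (?Q u *v z) + u \<bullet> (?Q w *v z) - (\<Sum>l\<in>UNIV. z $ l * (u \<bullet> (?Q (axis l 1) *v w)))"
    by (simp only: h1)
  also have "(\<Sum>l\<in>UNIV. z $ l * (u \<bullet> (?Q (axis l 1) *v w))) = u \<bullet> (?Q z *v w)"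
  proof -
    have "?Q z = ?Q (\<Sum>l\<in>UNIV. z $ l *\<^sub>R axis l 1)"
      using basis_expansion[of z] by (simp add: scalar_mult_eq_scaleR)
    also have "\<dots> = (\<Sum>l\<in>UNIV. z $ l *\<^sub>R ?Q (axis l 1))"
      by (simp add: linear_sum[OF linQ] linear_scale[OF linQ])
    finally have "?Q z *v w = (\<Sum>l\<in>UNIV. z $ l *\<^sub>R (?Q (axis l 1) *v w))"
      by (simp add: scaleR_mv sum_mv)
    then show ?thesis by (simp add: inner_sum_right)
  qed
  finally show ?thesis by simp
qed



lemma dform_anti: "d_form e X Y x = - d_form e Y X x"
  unfolding d_form_def lie_def by (simp add: inner_diff_right algebra_simps)

lemma IS_pt:
  assumes "indef_S_manifold U n Phi xi eta G" "y \<in> U"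
  shows "transpose (G y) = G y" "invertible (G y)" "rank (Phi y) = 2 * n"
    "\<And>v. Phi y *v (Phi y *v v) = - v + (\<Sum>a\<in>UNIV. (eta a y \<bullet> v) *\<^sub>R xi a y)"
    "\<And>a b. eta a y \<bullet> xi b y = (if a = b then 1 else 0)"
    "\<And>a. gb G y (xi a y) (xi a y) = 1 \<or> gb G y (xi a y) (xi a y) = -1"
    "\<And>u v. gb G y (Phi y *v u) (Phi y *v v) =
            gb G y u v - (\<Sum>a\<in>UNIV. gb G y (xi a y) (xi a y) * (eta a y \<bullet> u) * (eta a y \<bullet> v))"
  using assms unfolding indef_S_manifold_def by auto

lemma IS_card:
  fixes Phi :: "real^'m \<Rightarrow> real^'m^'m" and xi :: "'r::finite \<Rightarrow> real^'m \<Rightarrow> real^'m"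
  shows "indef_S_manifold U n Phi xi eta G \<Longrightarrow> CARD('m) = 2 * n + CARD('r)"
  unfolding indef_S_manifold_def by auto

lemma IS_dform:
  assumes "indef_S_manifold U n Phi xi eta G" "y \<in> U"
  shows "d_form (eta al) (\<lambda>_. a) (\<lambda>_. b) y = gb G y a (Phi y *v b)"
proof -
  have "\<forall>X Y. smooth_on U X \<longrightarrow> smooth_on U Y \<longrightarrow>
        (\<forall>x\<in>U. (\<forall>a. d_form (eta a) X Y x = gb G x (X x) (Phi x *v Y x)))"
    using assms(1) unfolding indef_S_manifold_def by blast
  then show ?thesis using smooth_const assms(2) by fastforce
qed

lemma IS_nij:
  assumes "indef_S_manifold U n Phi xi eta G" "y \<in> U"
  shows "nijenhuis Phi (\<lambda>_. a) (\<lambda>_. b) y + (\<Sum>al\<in>UNIV. (2 * d_form (eta al) (\<lambda>_. a) (\<lambda>_. b) y) *\<^sub>R xi al y) = 0"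
proof -
  have "\<forall>X Y. smooth_on U X \<longrightarrow> smooth_on U Y \<longrightarrow>
        (\<forall>x\<in>U. nijenhuis Phi X Y x + (\<Sum>a\<in>UNIV. (2 * d_form (eta a) X Y x) *\<^sub>R xi a x) = 0)"
    using assms(1) unfolding indef_S_manifold_def by blast
  then show ?thesis using smooth_const assms(2) by fastforce
qed

lemma skew_pt:
  assumes "indef_S_manifold U n Phi xi eta G" "y \<in> U"
  shows "gb G y (Phi y *v a) b = - gb G y a (Phi y *v b)"
proof -
  have "gb G y a (Phi y *v b) = - gb G y b (Phi y *v a)"
    using IS_dform[OF assms, of undefined a b] IS_dform[OF assms, of undefined b a]
      dform_anti[of "eta undefined" "\<lambda>_. a" "\<lambda>_. b" y] by simp
  moreover have "gb G y (Phi y *v a) b = gb G y b (Phi y *v a)" by (rule gb_sym[of G y, OF IS_pt(1)[OF assms]])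
  ultimately show ?thesis by linarith
qed

lemma phixi_pt:
  fixes Phi :: "real^'m \<Rightarrow> real^'m^'m" and xi :: "'r::finite \<Rightarrow> real^'m \<Rightarrow> real^'m"
  assumes IS: "indef_S_manifold U n Phi xi eta G" and y: "y \<in> U"
  shows "Phi y *v xi al y = 0"
proof -
  let ?A = "Phi y"
  let ?K = "{v. ?A *v v = 0}"
  let ?X = "range (\<lambda>a. xi a y)"
  have subK: "subspace ?K" by (auto simp: subspace_def matrix_vector_right_distrib matrix_vector_mult_scaleR)
  have KX: "?K \<subseteq> span ?X"
  proof
    fix v assume "v \<in> ?K"
    then have "?A *v (?A *v v) = 0" by simp
    then have "v = (\<Sum>a\<in>UNIV. (eta a y \<bullet> v) *\<^sub>R xi a y)" using IS_pt(4)[OF IS y, of v] by simp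
    also have "\<dots> \<in> span ?X" by (intro span_sum span_scale span_base) auto
    finally show "v \<in> span ?X" .
  qed
  let ?R = "range (\<lambda>z. transpose ?A *v z)"
  have subR: "subspace ?R" by (rule linear_subspace_image[OF matrix_vector_mul_linear subspace_UNIV])
  have orth: "{w \<in> UNIV. \<forall>x \<in> ?R. orthogonal x w} = ?K"
  proof (intro set_eqI iffI)
    fix w assume "w \<in> {w \<in> UNIV. \<forall>x \<in> ?R. orthogonal x w}"
    then have "orthogonal (transpose ?A *v (?A *v w)) w" by blast
    then have "(?A *v w) \<bullet> (?A *v w) = 0" unfolding orthogonal_def
      by (simp add: dot_lmul_matrix)
    then show "w \<in> ?K" by simp
  next
    fix w assume "w \<in> ?K"
    then show "w \<in> {w \<in> UNIV. \<forall>x \<in> ?R. orthogonal x w}"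
      unfolding orthogonal_def by (auto simp: dot_lmul_matrix)
  qed
  have "dim {w \<in> UNIV. \<forall>x \<in> ?R. orthogonal x w} + dim ?R = dim (UNIV :: (real^'m) set)"
    by (rule dim_subspace_orthogonal_to_vectors[OF subR subspace_UNIV]) simp
  moreover have rk: "dim ?R = rank ?A" by (metis rank_dim_range rank_transpose)
  ultimately have "dim ?K + rank ?A = CARD('m)"
    unfolding orth by simp
  then have dK: "dim ?K = CARD('r)" using IS_pt(3)[OF IS y] IS_card[OF IS] by simp
  have "dim (span ?X) \<le> card ?X" by (rule dim_le_card) auto
  also have "card ?X \<le> CARD('r)" by (rule card_image_le) simp
  finally have "dim (span ?X) \<le> dim ?K" using dK by simp
  then have "?K = span ?X" using subspace_dim_equal[OF subK subspace_span KX] by simp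
  moreover have "xi al y \<in> span ?X" by (rule span_base) auto
  ultimately show ?thesis by blast
qed

lemma eps_sq_pt:
  assumes "indef_S_manifold U n Phi xi eta G" "y \<in> U"
  shows "gb G y (xi al y) (xi al y) * gb G y (xi al y) (xi al y) = 1"
  using IS_pt(6)[OF assms, of al] by auto

lemma eta_eq_pt:
  assumes IS: "indef_S_manifold U n Phi xi eta G" and y: "y \<in> U"
  shows "eta al y \<bullet> v = gb G y (xi al y) (xi al y) * gb G y (xi al y) v"
proof -
  let ?e = "\<lambda>a. gb G y (xi a y) (xi a y)"
  have "gb G y (Phi y *v xi al y) (Phi y *v v) = 0"
    using phixi_pt[OF IS y] unfolding gb_def by simp
  then have "0 = gb G y (xi al y) v - (\<Sum>a\<in>UNIV. ?e a * (eta a y \<bullet> xi al y) * (eta a y \<bullet> v))"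
    using IS_pt(7)[OF IS y, of "xi al y" v] by simp
  also have "(\<Sum>a\<in>UNIV. ?e a * (eta a y \<bullet> xi al y) * (eta a y \<bullet> v)) = ?e al * (eta al y \<bullet> v)"
  proof -
    have "?e a * (eta a y \<bullet> xi al y) * (eta a y \<bullet> v) = (if a = al then ?e al * (eta al y \<bullet> v) else 0)" for a
      using IS_pt(5)[OF IS y, of a al] by simp
    then show ?thesis by simp
  qed
  finally have "?e al * (eta al y \<bullet> v) = gb G y (xi al y) v" by simp
  then have "?e al * (?e al * (eta al y \<bullet> v)) = ?e al * gb G y (xi al y) v" by simp
  then show ?thesis using eps_sq_pt[OF IS y, of al] by (simp add: mult.assoc[symmetric])
qed



lemma IS_smooth:
  assumes "indef_S_manifold U n Phi xi eta G"
  shows "open U" "smooth_on U Phi" "smooth_on U G" "\<And>a. smooth_on U (xi a)" "\<And>a. smooth_on U (eta a)"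
  using assms unfolding indef_S_manifold_def by auto

context
  fixes U :: "(real^'m) set" and n :: nat
    and Phi G :: "real^'m \<Rightarrow> real^'m^'m"
    and xi eta :: "'r::finite \<Rightarrow> real^'m \<Rightarrow> real^'m" and x :: "real^'m"
  assumes IS: "indef_S_manifold U n Phi xi eta G" and xU: "x \<in> U"
begin

lemma oU: "open U" using IS_smooth[OF IS] by simp

lemma dG: "(G has_derivative frechet_derivative G (at y)) (at y)" if "y \<in> U" for y
  using smooth_hasderiv[OF IS_smooth(3)[OF IS] oU that] .
lemma dPhi: "(Phi has_derivative frechet_derivative Phi (at y)) (at y)" if "y \<in> U" for y
  using smooth_hasderiv[OF IS_smooth(2)[OF IS] oU that] .
lemma dxi: "(xi a has_derivative frechet_derivative (xi a) (at y)) (at y)" if "y \<in> U" for y a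
  using smooth_hasderiv[OF IS_smooth(4)[OF IS] oU that] .
lemma deta: "(eta a has_derivative frechet_derivative (eta a) (at y)) (at y)" if "y \<in> U" for y a
  using smooth_hasderiv[OF IS_smooth(5)[OF IS] oU that] .

abbreviation "Q \<equiv> frechet_derivative G (at x)"
abbreviation "P \<equiv> frechet_derivative Phi (at x)"

lemma linQ: "linear Q" using has_derivative_linear[OF dG[OF xU]] .
lemma linP: "linear P" using has_derivative_linear[OF dPhi[OF xU]] .

lemma Qsym: "transpose (Q h) = Q h"
  by (rule deriv_sym[OF dG[OF xU] oU xU]) (rule IS_pt(1)[OF IS])

lemma F1: "a \<bullet> (Q u *v (Phi x *v b)) + gb G x a (P u *v b) + b \<bullet> (Q u *v (Phi x *v a)) + gb G x b (P u *v a) = 0"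
proof -
  have d: "((\<lambda>y. a \<bullet> (G y *v (Phi y *v b)) + b \<bullet> (G y *v (Phi y *v a))) has_derivative
     (\<lambda>h. (a \<bullet> (G x *v (P h *v b)) + a \<bullet> (Q h *v (Phi x *v b))) + (b \<bullet> (G x *v (P h *v a)) + b \<bullet> (Q h *v (Phi x *v a))))) (at x)"
    by (rule has_derivative_add[OF hd_gphi[OF dG[OF xU] dPhi[OF xU]] hd_gphi[OF dG[OF xU] dPhi[OF xU]]])
  have c: "a \<bullet> (G y *v (Phi y *v b)) + b \<bullet> (G y *v (Phi y *v a)) = 0" if "y \<in> U" for y
  proof -
    have "gb G y (Phi y *v a) b = - gb G y a (Phi y *v b)" by (rule skew_pt[OF IS that])
    moreover have "gb G y (Phi y *v a) b = gb G y b (Phi y *v a)" by (rule gb_sym[of G y, OF IS_pt(1)[OF IS that]])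
    ultimately show ?thesis unfolding gb_def by linarith
  qed
  have "(a \<bullet> (G x *v (P u *v b)) + a \<bullet> (Q u *v (Phi x *v b))) + (b \<bullet> (G x *v (P u *v a)) + b \<bullet> (Q u *v (Phi x *v a))) = 0"
    by (rule deriv_const_on[OF d oU xU c])
  then show ?thesis unfolding gb_def by linarith
qed

lemma F4: "P u *v xi b x = - (Phi x *v frechet_derivative (xi b) (at x) u)"
proof -
  have d: "((\<lambda>y. Phi y *v xi b y) has_derivative (\<lambda>h. Phi x *v frechet_derivative (xi b) (at x) h + P h *v xi b x)) (at x)"
    by (rule hd_mv[OF dPhi[OF xU] dxi[OF xU]])
  have "Phi x *v frechet_derivative (xi b) (at x) u + P u *v xi b x = 0"
    by (rule deriv_const_on[OF d oU xU]) (rule phixi_pt[OF IS])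
  then show ?thesis by (simp add: eq_neg_iff_add_eq_0 add.commute)
qed

lemma F5: "frechet_derivative (eta al) (at x) u \<bullet> w - frechet_derivative (eta al) (at x) w \<bullet> u
   = 2 * gb G x u (Phi x *v w)"
proof -
  have "d_form (eta al) (\<lambda>_. u) (\<lambda>_. w) x = gb G x u (Phi x *v w)" by (rule IS_dform[OF IS xU])
  moreover have "d_form (eta al) (\<lambda>_. u) (\<lambda>_. w) x =
      (1/2) * (frechet_derivative (eta al) (at x) u \<bullet> w - frechet_derivative (eta al) (at x) w \<bullet> u)"
    unfolding d_form_def lie_def by (simp add: fd_inc[OF deta[OF xU]] fd_const)
  ultimately show ?thesis by simp
qed

lemma F6: "P (Phi x *v a) *v b - P (Phi x *v b) *v a + Phi x *v (P b *v a) - Phi x *v (P a *v b)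
    + (\<Sum>al\<in>UNIV. (2 * gb G x a (Phi x *v b)) *\<^sub>R xi al x) = 0"
proof -
  have N: "nijenhuis Phi (\<lambda>_. a) (\<lambda>_. b) x + (\<Sum>al\<in>UNIV. (2 * d_form (eta al) (\<lambda>_. a) (\<lambda>_. b) x) *\<^sub>R xi al x) = 0"
    by (rule IS_nij[OF IS xU])
  have "nijenhuis Phi (\<lambda>_. a) (\<lambda>_. b) x = P (Phi x *v a) *v b - P (Phi x *v b) *v a + Phi x *v (P b *v a) - Phi x *v (P a *v b)"
    unfolding nijenhuis_def lie_def phiF_def
    by (simp add: fd_const fd_mvc[OF dPhi[OF xU]] matrix_vector_mult_diff_distrib linear_neg[OF matrix_vector_mul_linear])
  moreover have "d_form (eta al) (\<lambda>_. a) (\<lambda>_. b) x = gb G x a (Phi x *v b)" for al by (rule IS_dform[OF IS xU])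
  ultimately show ?thesis using N by simp
qed


lemma sq_one_deriv:
  assumes "(f has_derivative f') (at x)" "\<And>y. y \<in> U \<Longrightarrow> f y * f y = (1::real)"
  shows "f' h = 0"
proof -
  have "((\<lambda>y. f y * f y) has_derivative (\<lambda>h. f x * f' h + f' h * f x)) (at x)"
    using has_derivative_mult[OF assms(1) assms(1)] .
  then have "f x * f' h + f' h * f x = 0" by (rule deriv_const_on[OF _ oU xU assms(2)])
  moreover have "f x \<noteq> 0" using assms(2)[OF xU] by auto
  ultimately show ?thesis by (simp add: mult.commute)
qed

lemma eps_deriv: "((\<lambda>y. xi al y \<bullet> (G y *v xi al y)) has_derivative (\<lambda>h. 0)) (at x)"
proof -
  let ?X = "frechet_derivative (xi al) (at x)"
  have d: "((\<lambda>y. xi al y \<bullet> (G y *v xi al y)) has_derivative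
      (\<lambda>h. xi al x \<bullet> (G x *v ?X h + Q h *v xi al x) + ?X h \<bullet> (G x *v xi al x))) (at x)"
    by (rule has_derivative_inner[OF dxi[OF xU] hd_mv[OF dG[OF xU] dxi[OF xU]]])
  have "xi al x \<bullet> (G x *v ?X h + Q h *v xi al x) + ?X h \<bullet> (G x *v xi al x) = 0" for h
    by (rule sq_one_deriv[OF d]) (use eps_sq_pt[OF IS] in \<open>simp add: gb_def\<close>)
  then show ?thesis using d by simp
qed

lemma F2: "gb G x (P u *v a) (Phi x *v b) + (Phi x *v a) \<bullet> (Q u *v (Phi x *v b)) + gb G x (Phi x *v a) (P u *v b)
   = a \<bullet> (Q u *v b) - (\<Sum>al\<in>UNIV. gb G x (xi al x) (xi al x) *
        ((frechet_derivative (eta al) (at x) u \<bullet> a) * (eta al x \<bullet> b) + (eta al x \<bullet> a) * (frechet_derivative (eta al) (at x) u \<bullet> b)))"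
proof -
  let ?He = "\<lambda>al. frechet_derivative (eta al) (at x)"
  let ?e = "\<lambda>al y. xi al y \<bullet> (G y *v xi al y)"
  have d1: "((\<lambda>y. (Phi y *v a) \<bullet> (G y *v (Phi y *v b))) has_derivative
     (\<lambda>h. (Phi x *v a) \<bullet> (G x *v (P h *v b) + Q h *v (Phi x *v b)) + (P h *v a) \<bullet> (G x *v (Phi x *v b)))) (at x)"
    by (rule has_derivative_inner[OF hd_mvc[OF dPhi[OF xU]] hd_mv[OF dG[OF xU] hd_mvc[OF dPhi[OF xU]]]])
  have d2: "((\<lambda>y. a \<bullet> (G y *v b)) has_derivative (\<lambda>h. a \<bullet> (Q h *v b))) (at x)"
    using has_derivative_inner[OF has_derivative_const[of a] hd_mvc[OF dG[OF xU], of b]] by simp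
  have d3a: "((\<lambda>y. (eta al y \<bullet> a) * (eta al y \<bullet> b)) has_derivative
     (\<lambda>h. (eta al x \<bullet> a) * (?He al h \<bullet> b) + (?He al h \<bullet> a) * (eta al x \<bullet> b))) (at x)" for al
    using has_derivative_mult[OF has_derivative_inner[OF deta[OF xU] has_derivative_const[of a]]
          has_derivative_inner[OF deta[OF xU] has_derivative_const[of b]]] by simp
  have d3: "((\<lambda>y. ?e al y * ((eta al y \<bullet> a) * (eta al y \<bullet> b))) has_derivative
     (\<lambda>h. ?e al x * ((eta al x \<bullet> a) * (?He al h \<bullet> b) + (?He al h \<bullet> a) * (eta al x \<bullet> b)))) (at x)" for al
    using has_derivative_mult[OF eps_deriv d3a] by simp
  have d: "((\<lambda>y. (Phi y *v a) \<bullet> (G y *v (Phi y *v b)) - a \<bullet> (G y *v b)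
        + (\<Sum>al\<in>UNIV. ?e al y * ((eta al y \<bullet> a) * (eta al y \<bullet> b)))) has_derivative
     (\<lambda>h. ((Phi x *v a) \<bullet> (G x *v (P h *v b) + Q h *v (Phi x *v b)) + (P h *v a) \<bullet> (G x *v (Phi x *v b)))
        - a \<bullet> (Q h *v b)
        + (\<Sum>al\<in>UNIV. ?e al x * ((eta al x \<bullet> a) * (?He al h \<bullet> b) + (?He al h \<bullet> a) * (eta al x \<bullet> b))))) (at x)"
    by (rule has_derivative_add[OF has_derivative_diff[OF d1 d2] has_derivative_sum]) (rule d3)
  have c: "(Phi y *v a) \<bullet> (G y *v (Phi y *v b)) - a \<bullet> (G y *v b)
        + (\<Sum>al\<in>UNIV. ?e al y * ((eta al y \<bullet> a) * (eta al y \<bullet> b))) = 0" if "y \<in> U" for y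
    using IS_pt(7)[OF IS that, of a b] unfolding gb_def by (simp add: mult.assoc)
  have z: "((Phi x *v a) \<bullet> (G x *v (P u *v b) + Q u *v (Phi x *v b)) + (P u *v a) \<bullet> (G x *v (Phi x *v b)))
        - a \<bullet> (Q u *v b)
        + (\<Sum>al\<in>UNIV. ?e al x * ((eta al x \<bullet> a) * (?He al u \<bullet> b) + (?He al u \<bullet> a) * (eta al x \<bullet> b))) = 0"
    by (rule deriv_const_on[OF d oU xU c])
  show ?thesis using z unfolding gb_def by (simp add: inner_add_right algebra_simps)
qed


lemma inner_eq_all: "(\<And>c. u \<bullet> c = v \<bullet> (c::real^'m)) \<Longrightarrow> u = v"
proof -
  assume h: "\<And>c. u \<bullet> c = v \<bullet> (c::real^'m)"
  have "(u - v) \<bullet> (u - v) = 0" using h[of "u - v"] by (simp add: inner_diff_left)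
  then show "u = v" by simp
qed

lemma F3: "v \<bullet> (Q u *v (Phi x *v w)) + gb G x v (P u *v w) + w \<bullet> (Q v *v (Phi x *v u)) + gb G x w (P v *v u)
   + u \<bullet> (Q w *v (Phi x *v v)) + gb G x u (P w *v v) = 0"
proof -
  define e0 where "e0 = eta undefined"
  have se0: "smooth_on U e0" unfolding e0_def using IS_smooth(5)[OF IS] .
  have de0: "(e0 has_derivative frechet_derivative e0 (at y)) (at y)" if "y \<in> U" for y
    using smooth_hasderiv[OF se0 oU that] .
  define h where "h k y = frechet_derivative e0 (at y) (axis k 1)" for k y
  have sh: "smooth_on U (h k)" for k unfolding h_def[abs_def] by (rule smooth_partial[OF se0])
  have dh: "(h k has_derivative frechet_derivative (h k) (at y)) (at y)" if "y \<in> U" for k y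
    using smooth_hasderiv[OF sh oU that] .
  define H where "H k = frechet_derivative (h k) (at x)" for k
  have linH: "linear (H k)" for k unfolding H_def using has_derivative_linear[OF dh[OF xU]] .
  have sw: "H k (axis l 1) = H l (axis k 1)" for k l
  proof (rule inner_eq_all)
    fix c :: "real^'m"
    have Df: "((\<lambda>y. e0 y \<bullet> c) has_derivative (\<lambda>v. frechet_derivative e0 (at y) v \<bullet> c)) (at y)" if "y \<in> U" for y
      using has_derivative_inner[OF de0[OF that] has_derivative_const[of c]] by simp
    have DF: "((\<lambda>z. frechet_derivative e0 (at z) (axis j 1) \<bullet> c) has_derivative
        (\<lambda>v. frechet_derivative (h j) (at y) v \<bullet> c)) (at y)" if "y \<in> U" for y j
      using has_derivative_inner[OF dh[OF that, of j] has_derivative_const[of c]] unfolding h_def by simp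
    have cc: "continuous_on U (\<lambda>y. frechet_derivative (h j) (at y) (axis i 1) \<bullet> c)" for i j
      by (intro continuous_intros smooth_cont smooth_partial sh)
    show "H k (axis l 1) \<bullet> c = H l (axis k 1) \<bullet> c"
      unfolding H_def
      by (rule schwarz[OF oU xU Df DF DF cc cc]) simp_all
  qed
  \<comment> \<open>Omega as derivative of e0\<close>
  have fdexp: "frechet_derivative e0 (at y) a = (\<Sum>k\<in>UNIV. a $ k *\<^sub>R h k y)" if "y \<in> U" for y a
  proof -
    have lin: "linear (frechet_derivative e0 (at y))" using has_derivative_linear[OF de0[OF that]] .
    have "frechet_derivative e0 (at y) a = frechet_derivative e0 (at y) (\<Sum>k\<in>UNIV. a $ k *\<^sub>R axis k 1)"
      using basis_expansion[of a] by (simp add: scalar_mult_eq_scaleR)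
    also have "\<dots> = (\<Sum>k\<in>UNIV. a $ k *\<^sub>R h k y)"
      unfolding h_def by (simp add: linear_sum[OF lin] linear_scale[OF lin])
    finally show ?thesis .
  qed
  have Om: "v \<bullet> (G y *v (Phi y *v w)) = (1/2) * ((\<Sum>k\<in>UNIV. v $ k * (h k y \<bullet> w)) - (\<Sum>k\<in>UNIV. w $ k * (h k y \<bullet> v)))"
    if "y \<in> U" for y v w
  proof -
    have "d_form e0 (\<lambda>_. v) (\<lambda>_. w) y = gb G y v (Phi y *v w)" unfolding e0_def by (rule IS_dform[OF IS that])
    moreover have "d_form e0 (\<lambda>_. v) (\<lambda>_. w) y =
      (1/2) * (frechet_derivative e0 (at y) v \<bullet> w - frechet_derivative e0 (at y) w \<bullet> v)"
      unfolding d_form_def lie_def by (simp add: fd_inc[OF de0[OF that]] fd_const)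
    ultimately show ?thesis unfolding gb_def using fdexp[OF that]
      by (simp add: inner_sum_left)
  qed
  have E3: "v \<bullet> (G x *v (P u *v w)) + v \<bullet> (Q u *v (Phi x *v w)) =
      (1/2) * ((\<Sum>k\<in>UNIV. v $ k * (H k u \<bullet> w)) - (\<Sum>k\<in>UNIV. w $ k * (H k u \<bullet> v)))" for u v w
  proof -
    have dR: "((\<lambda>y. (1/2) * ((\<Sum>k\<in>UNIV. v $ k * (h k y \<bullet> w)) - (\<Sum>k\<in>UNIV. w $ k * (h k y \<bullet> v)))) has_derivative
        (\<lambda>u. (1/2) * ((\<Sum>k\<in>UNIV. v $ k * (H k u \<bullet> w)) - (\<Sum>k\<in>UNIV. w $ k * (H k u \<bullet> v))))) (at x)"
    proof -
      have a: "((\<lambda>y. c * (h k y \<bullet> d)) has_derivative (\<lambda>u. c * (H k u \<bullet> d))) (at x)" for k c d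
        using has_derivative_mult[OF has_derivative_const[of c] has_derivative_inner[OF dh[OF xU] has_derivative_const[of d]]]
        unfolding H_def by simp
      have s1: "((\<lambda>y. \<Sum>k\<in>UNIV. a $ k * (h k y \<bullet> d)) has_derivative (\<lambda>u. \<Sum>k\<in>UNIV. a $ k * (H k u \<bullet> d))) (at x)" for a d
        by (rule has_derivative_sum) (rule a)
      show ?thesis
        using has_derivative_mult[OF has_derivative_const[of "1/2"] has_derivative_diff[OF s1[of v w] s1[of w v]]] by simp
    qed
    have "((\<lambda>y. v \<bullet> (G y *v (Phi y *v w))) has_derivative
        (\<lambda>u. (1/2) * ((\<Sum>k\<in>UNIV. v $ k * (H k u \<bullet> w)) - (\<Sum>k\<in>UNIV. w $ k * (H k u \<bullet> v))))) (at x)"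
      by (rule has_derivative_transform_within_open[OF dR oU xU]) (simp add: Om)
    moreover have "((\<lambda>y. v \<bullet> (G y *v (Phi y *v w))) has_derivative
        (\<lambda>h. v \<bullet> (G x *v (P h *v w)) + v \<bullet> (Q h *v (Phi x *v w)))) (at x)"
      by (rule hd_gphi[OF dG[OF xU] dPhi[OF xU]])
    ultimately have "(\<lambda>h. v \<bullet> (G x *v (P h *v w)) + v \<bullet> (Q h *v (Phi x *v w))) =
        (\<lambda>u. (1/2) * ((\<Sum>k\<in>UNIV. v $ k * (H k u \<bullet> w)) - (\<Sum>k\<in>UNIV. w $ k * (H k u \<bullet> v))))"
      using has_derivative_unique by blast
    then show ?thesis by metis
  qed
  define T where "T u v = (\<Sum>k\<in>UNIV. v $ k *\<^sub>R H k u)" for u v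
  have Tin: "(\<Sum>k\<in>UNIV. v $ k * (H k u \<bullet> w)) = T u v \<bullet> w" for u v w
    unfolding T_def by (simp add: inner_sum_left)
  have Hexp: "H k u = (\<Sum>l\<in>UNIV. u $ l *\<^sub>R H k (axis l 1))" for k u
  proof -
    have "H k u = H k (\<Sum>l\<in>UNIV. u $ l *\<^sub>R axis l 1)"
      using basis_expansion[of u] by (simp add: scalar_mult_eq_scaleR)
    then show ?thesis by (simp add: linear_sum[OF linH] linear_scale[OF linH])
  qed
  have Tsym: "T u v = T v u" for u v
  proof -
    have "T u v = (\<Sum>k\<in>UNIV. \<Sum>l\<in>UNIV. (v $ k * u $ l) *\<^sub>R H k (axis l 1))"
      unfolding T_def by (subst Hexp) (simp add: scaleR_sum_right)
    also have "\<dots> = (\<Sum>l\<in>UNIV. \<Sum>k\<in>UNIV. (v $ k * u $ l) *\<^sub>R H k (axis l 1))" by (rule sum.swap)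
    also have "\<dots> = (\<Sum>l\<in>UNIV. \<Sum>k\<in>UNIV. (u $ l * v $ k) *\<^sub>R H l (axis k 1))"
      by (simp add: sw mult.commute)
    also have "\<dots> = T v u"
      unfolding T_def by (subst (2) Hexp) (simp add: scaleR_sum_right)
    finally show ?thesis .
  qed
  have E3': "v \<bullet> (Q u *v (Phi x *v w)) + gb G x v (P u *v w) = (1/2) * (T u v \<bullet> w - T u w \<bullet> v)" for u v w
    using E3[of v u w] unfolding gb_def Tin by simp
  show ?thesis using E3'[of v u w] E3'[of w v u] E3'[of u w v] Tsym[of u v] Tsym[of v w] Tsym[of w u]
    by (simp add: inner_commute algebra_simps)
qed

end


lemma link:
  fixes U :: "(real^'m) set" and Phi G :: "real^'m \<Rightarrow> real^'m^'m"
    and xi eta :: "'r::finite \<Rightarrow> real^'m \<Rightarrow> real^'m"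
  assumes IS: "indef_S_manifold U n Phi xi eta G" and xU: "x \<in> U"
  shows "gb G x (nabla_phi G Phi x u a) z =
    Bf (\<lambda>u a b. a \<bullet> (frechet_derivative G (at x) u *v b)) (gb G x)
       (\<lambda>u a. frechet_derivative Phi (at x) u *v a) (\<lambda>v. Phi x *v v) u a z"
proof -
  let ?q = "\<lambda>u a b. a \<bullet> (frechet_derivative G (at x) u *v b)"
  have ck: "gb G x (christoffel G x u w) z' = kosz ?q u w z'" for w z'
    unfolding kosz_def
    by (rule christoffel_kos[OF IS_pt(1)[OF IS xU] IS_pt(2)[OF IS xU] linQ[OF IS xU]])
  have sk: "gb G x (Phi x *v c) z = - gb G x c (Phi x *v z)" for c by (rule skew_pt[OF IS xU])
  show ?thesis
    unfolding nabla_phi_def Bf_def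
    using ck[of "Phi x *v a" z] ck[of a "Phi x *v z"] sk[of "christoffel G x u a"]
    by (simp add: gb_def inner_add_left inner_diff_left)
qed

theorem lemma4p1:
  fixes U :: "(real^'m) set" and n :: nat
    and Phi G :: "real^'m \<Rightarrow> real^'m^'m"
    and xi eta :: "'r::finite \<Rightarrow> real^'m \<Rightarrow> real^'m"
    and F :: "real^'m \<Rightarrow> real" and S :: "real^'m \<Rightarrow> (real^'m) set"
    and E N :: "real^'m \<Rightarrow> real^'m"
  assumes "indef_S_manifold U n Phi xi eta G"
    and "char_lightlike_hypersurface U Phi xi G F S E N"
    and "x \<in> U" and "F x = 0"
    and "X \<in> D0 G Phi S E N x" and "Y \<in> D0 G Phi S E N x"
  shows "gb G x (nabla_phi G Phi x X Y) (E x) = 0 \<and> gb G x (nabla_phi G Phi x X Y) (N x) = 0"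
proof -
  note IS = assms(1) and xU = assms(3)
  let ?Q = "frechet_derivative G (at x)"
  let ?P = "frechet_derivative Phi (at x)"
  let ?q = "\<lambda>u a b. a \<bullet> (?Q u *v b)"
  let ?gg = "gb G x"
  let ?Pm = "\<lambda>u a. ?P u *v a"
  let ?p = "\<lambda>v. Phi x *v v"
  let ?he = "\<lambda>al u w. frechet_derivative (eta al) (at x) u \<bullet> w"
  let ?hx = "\<lambda>b u. frechet_derivative (xi b) (at x) u"
  let ?et = "\<lambda>al v. eta al x \<bullet> v"
  let ?xi = "\<lambda>al. xi al x"
  let ?ep = "\<lambda>al. gb G x (xi al x) (xi al x)"
  have linQ: "linear ?Q" by (rule linQ[OF IS xU])
  have gsym: "gb G x u v = gb G x v u" for u v by (rule gb_sym[of G x, OF IS_pt(1)[OF IS xU]])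
  have etp: "eta al x \<bullet> (Phi x *v v) = 0" for al v
  proof -
    have "gb G x (xi al x) (Phi x *v v) = - gb G x (Phi x *v xi al x) v" using skew_pt[OF IS xU] by simp
    also have "\<dots> = 0" using phixi_pt[OF IS xU] by (simp add: gb_def)
    finally show ?thesis using eta_eq_pt[OF IS xU] by simp
  qed
  have main: "Bf ?q ?gg ?Pm ?p X Y Z = 0"
    if XZ: "?gg X Z = 0" and YZ: "?gg Y Z = 0" and etZ: "\<And>al. ?et al Z = 0" and xiZ: "\<And>al. ?gg (?xi al) Z = 0"
    for Z
  proof (rule nabla_alg[where q="?q" and gg="?gg" and Pm="?Pm" and p="?p" and he="?he" and hx="?hx"
        and et="?et" and xi="?xi" and ep="?ep"])
    show "linear (\<lambda>u. ?q u a b)" for a b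
      by (rule linearI) (simp_all add: linear_add[OF linQ] linear_scale[OF linQ] matrix_vector_mult_add_rdistrib
          scaleR_mv inner_add_right)
    show "linear (\<lambda>a. ?q u a b)" for u b by (rule linearI) (simp_all add: inner_add_left)
    show "linear (?q u a)" for u a
      by (rule linearI) (simp_all add: matrix_vector_right_distrib matrix_vector_mult_scaleR inner_add_right)
    show "?q u a b = ?q u b a" for u a b by (rule sym_mat_inner[OF Qsym[OF IS xU]])
    show "linear (?gg u)" for u
      unfolding gb_def by (rule linearI) (simp_all add: matrix_vector_right_distrib matrix_vector_mult_scaleR inner_add_right)
    show "?gg u v = ?gg v u" for u v by (rule gsym)
    show "linear (?Pm u)" for u by simp
    show "linear ?p" by simp
    show "linear (?et al)" for al by (rule linearI) (simp_all add: inner_add_right)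
    show "linear (?he al u)" for al u by (rule linearI) (simp_all add: inner_add_right)
    show "?p (?p v) = - v + (\<Sum>al\<in>UNIV. ?et al v *\<^sub>R ?xi al)" for v by (rule IS_pt(4)[OF IS xU])
    show "?p (?xi al) = 0" for al by (rule phixi_pt[OF IS xU])
    show "?et al (?p v) = 0" for al v by (rule etp)
    show "?et al (?xi b) = (if al = b then 1 else 0)" for al b by (rule IS_pt(5)[OF IS xU])
    show "?gg (?p a) b = - ?gg a (?p b)" for a b by (rule skew_pt[OF IS xU])
    show "?ep al * ?ep al = 1" for al by (rule eps_sq_pt[OF IS xU])
    show "?q u a (?p b) + ?gg a (?Pm u b) + ?q u b (?p a) + ?gg b (?Pm u a) = 0" for u a b
      by (rule F1[OF IS xU])
    show "?gg (?Pm u a) (?p b) + ?q u (?p a) (?p b) + ?gg (?p a) (?Pm u b)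
               = ?q u a b - (\<Sum>al\<in>UNIV. ?ep al * (?he al u a * ?et al b + ?et al a * ?he al u b))" for u a b
      by (rule F2[OF IS xU])
    show "?q u v (?p w) + ?gg v (?Pm u w) + ?q v w (?p u) + ?gg w (?Pm v u)
               + ?q w u (?p v) + ?gg u (?Pm w v) = 0" for u v w
      by (rule F3[OF IS xU])
    show "?Pm u (?xi b) = - ?p (?hx b u)" for u b by (rule F4[OF IS xU])
    show "?he al u w - ?he al w u = 2 * ?gg u (?p w)" for al u w by (rule F5[OF IS xU])
    show "?Pm (?p Y') Z' - ?Pm (?p Z') Y' + ?p (?Pm Z' Y') - ?p (?Pm Y' Z')
               + (\<Sum>al\<in>UNIV. (2 * ?gg Y' (?p Z')) *\<^sub>R ?xi al) = 0" for Y' Z'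
      by (rule F6[OF IS xU])
  qed (fact XZ YZ etZ xiZ)+
  let ?T = "{v. frechet_derivative F (at x) v = 0}"
  have ch: "S x \<subseteq> ?T" "E x \<in> rad_space G x ?T" "\<forall>s\<in>S x. gb G x (N x) s = 0"
      "\<forall>a. xi a x \<in> ?T" "{v. Phi x *v v = 0} \<subseteq> S x"
    using assms(2,3,4) unfolding char_lightlike_hypersurface_def Let_def by auto
  have XS: "X \<in> S x" "Y \<in> S x" using assms(5,6) unfolding D0_def by auto
  have xiS: "xi al x \<in> S x" for al using ch(5) phixi_pt[OF IS xU] by auto
  have Erad: "gb G x (E x) w = 0" if "w \<in> ?T" for w using ch(2) that unfolding rad_space_def by auto
  have et0: "eta al x \<bullet> z = 0" if "gb G x (xi al x) z = 0" for al z
    using eta_eq_pt[OF IS xU, of al z] that by simp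
  have "Bf ?q ?gg ?Pm ?p X Y (E x) = 0"
  proof (rule main)
    show "gb G x X (E x) = 0" using Erad[of X] XS ch(1) gsym by auto
    show "gb G x Y (E x) = 0" using Erad[of Y] XS ch(1) gsym by auto
    show "gb G x (xi al x) (E x) = 0" for al using Erad[of "xi al x"] ch(4) gsym by auto
    then show "eta al x \<bullet> E x = 0" for al using et0 by blast
  qed
  moreover have "Bf ?q ?gg ?Pm ?p X Y (N x) = 0"
  proof (rule main)
    show "gb G x X (N x) = 0" using ch(3) XS gsym by auto
    show "gb G x Y (N x) = 0" using ch(3) XS gsym by auto
    show "gb G x (xi al x) (N x) = 0" for al
    proof -
      have "gb G x (N x) (xi al x) = 0" using ch(3) xiS by blast
      then show ?thesis using gsym[of "xi al x" "N x"] by simp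
    qed
    then show "eta al x \<bullet> N x = 0" for al using et0 by blast
  qed
  ultimately show ?thesis using link[OF IS xU] by simp
qed


end
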